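(* Let $n\ge1$ and let $\mathbf s=(s_1,\dots,s_n)\in\mathbb C^n$ be typical, i.e. $s_i+s_j\neq0$ for all $i\neq j$. Then the restriction of $V(\mathbf s)$ to $W^n$ is a simple $W^n$-module.
   Context: $U(\mathfrak h_n)$ is the associative superalgebra generated by odd elements $\xi_1,\dots,\xi_n$ with $\xi_i\xi_j+\xi_j\xi_i=0$ for $i\neq j$, and $x_i=\xi_i^2$ (central); it is the enveloping algebra of the Cartan subalgebra of the queer Lie superalgebra $Q(n)$. $W^n\subset U(\mathfrak h_n)$ is the finite $W$-algebra of $Q(n)$ for the principal even nilpotent element, realized in $U(\mathfrak h_n)$ via the injective Harish-Chandra homomorphism; concretely it is the subalgebra generated by $u_k(0),u_k(1)$ ($1\le k\le n$), the even and odd parts of $\sum_{1\le i_1<\dots<i_k\le n}\prod_{j=1}^{k}(x_{i_j}+(-1)^{k-j}\xi_{i_j})$ (ordered product). For $\mathbf s\in\mathbb C^n$, $V(\mathbf s)$ is a simple $\mathbb Z_2$-graded $U(\mathfrak h_n)$-module on which each $x_i$ acts by the scalar $s_i$; it exists and is unique up to isomorphism and parity change. *)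

theory Defs
  imports Complex_Main
begin

definition is_grading :: "(complex \<Rightarrow> 'v::ab_group_add \<Rightarrow> 'v) \<Rightarrow> 'v set \<Rightarrow> 'v set \<Rightarrow> bool" where
  "is_grading sc V0 V1 \<longleftrightarrow> module.subspace sc V0 \<and> module.subspace sc V1 \<and>
     (\<forall>v. \<exists>!p. fst p \<in> V0 \<and> snd p \<in> V1 \<and> v = fst p + snd p)"

definition graded_subspace :: "(complex \<Rightarrow> 'v::ab_group_add \<Rightarrow> 'v) \<Rightarrow> 'v set \<Rightarrow> 'v set \<Rightarrow> 'v set \<Rightarrow> bool" where
  "graded_subspace sc V0 V1 W \<longleftrightarrow> module.subspace sc W \<and>
     (\<forall>w\<in>W. \<exists>a b. a \<in> V0 \<inter> W \<and> b \<in> V1 \<inter> W \<and> w = a + b)"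

text \<open>The (unital, associative) algebra of operators generated by a set G of operators;
  this is the image in End(V) of the algebra generated by elements acting as G.\<close>
inductive_set op_alg :: "(complex \<Rightarrow> 'v::ab_group_add \<Rightarrow> 'v) \<Rightarrow> ('v \<Rightarrow> 'v) set \<Rightarrow> ('v \<Rightarrow> 'v) set"
  for sc G where
  op_alg_id: "id \<in> op_alg sc G"
| op_alg_gen: "g \<in> G \<Longrightarrow> g \<in> op_alg sc G"
| op_alg_add: "S \<in> op_alg sc G \<Longrightarrow> T \<in> op_alg sc G \<Longrightarrow> (\<lambda>v. S v + T v) \<in> op_alg sc G"
| op_alg_scale: "T \<in> op_alg sc G \<Longrightarrow> (\<lambda>v. sc c (T v)) \<in> op_alg sc G"
| op_alg_comp: "S \<in> op_alg sc G \<Longrightarrow> T \<in> op_alg sc G \<Longrightarrow> S \<circ> T \<in> op_alg sc G"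

definition simple_graded :: "(complex \<Rightarrow> 'v::ab_group_add \<Rightarrow> 'v) \<Rightarrow> 'v set \<Rightarrow> 'v set \<Rightarrow> ('v \<Rightarrow> 'v) set \<Rightarrow> bool" where
  "simple_graded sc V0 V1 G \<longleftrightarrow> (UNIV :: 'v set) \<noteq> {0} \<and>
     (\<forall>W. graded_subspace sc V0 V1 W \<and> (\<forall>T\<in>op_alg sc G. \<forall>w\<in>W. T w \<in> W)
          \<longrightarrow> W = {0} \<or> W = UNIV)"

text \<open>A Z2-graded U(h_n)-module: the generators xi_1..xi_n (indices 0..n-1 here) act by
  odd linear operators Xi i satisfying Xi i Xi j + Xi j Xi i = 0 for i \<noteq> j.
  (Centrality of x_i = xi_i^2 follows from these relations.)\<close>
definition Uh_module :: "(complex \<Rightarrow> 'v::ab_group_add \<Rightarrow> 'v) \<Rightarrow> 'v set \<Rightarrow> 'v set \<Rightarrow> nat \<Rightarrow> (nat \<Rightarrow> 'v \<Rightarrow> 'v) \<Rightarrow> bool" where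
  "Uh_module sc V0 V1 n Xi \<longleftrightarrow> vector_space sc \<and> is_grading sc V0 V1 \<and>
     (\<forall>i<n. Vector_Spaces.linear sc sc (Xi i) \<and> Xi i ` V0 \<subseteq> V1 \<and> Xi i ` V1 \<subseteq> V0) \<and>
     (\<forall>i<n. \<forall>j<n. i \<noteq> j \<longrightarrow> (\<forall>v. Xi i (Xi j v) + Xi j (Xi i v) = 0))"

text \<open>Ordered product prod_{j=1}^k (x_{i_j} + t (-1)^(k-j) xi_{i_j}) acting on V,
  for the list [i_1,...,i_k]; t = 1 gives the element itself, t = -1 its image under
  the parity automorphism xi \<mapsto> -xi.\<close>
fun ord_prod :: "(complex \<Rightarrow> 'v::ab_group_add \<Rightarrow> 'v) \<Rightarrow> (nat \<Rightarrow> 'v \<Rightarrow> 'v) \<Rightarrow> complex \<Rightarrow> nat list \<Rightarrow> 'v \<Rightarrow> 'v" where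
  "ord_prod sc Xi t [] = id"
| "ord_prod sc Xi t (i # is) =
     (\<lambda>v. Xi i (Xi i v) + sc (t * (-1) ^ length is) (Xi i v)) \<circ> ord_prod sc Xi t is"

text \<open>Action of u_k (t = 1), resp. its parity-twisted version (t = -1):
  sum over i_1 < ... < i_k in {1..n}.\<close>
definition u_op :: "(complex \<Rightarrow> 'v::ab_group_add \<Rightarrow> 'v) \<Rightarrow> (nat \<Rightarrow> 'v \<Rightarrow> 'v) \<Rightarrow> nat \<Rightarrow> nat \<Rightarrow> complex \<Rightarrow> 'v \<Rightarrow> 'v" where
  "u_op sc Xi n k t = (\<lambda>v. \<Sum>S\<in>{S. S \<subseteq> {..<n} \<and> card S = k}. ord_prod sc Xi t (sorted_list_of_set S) v)"

text \<open>Actions of the even part u_k(0) and odd part u_k(1) of u_k.\<close>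
definition u_even :: "(complex \<Rightarrow> 'v::ab_group_add \<Rightarrow> 'v) \<Rightarrow> (nat \<Rightarrow> 'v \<Rightarrow> 'v) \<Rightarrow> nat \<Rightarrow> nat \<Rightarrow> 'v \<Rightarrow> 'v" where
  "u_even sc Xi n k = (\<lambda>v. sc (1/2) (u_op sc Xi n k 1 v + u_op sc Xi n k (-1) v))"

definition u_odd :: "(complex \<Rightarrow> 'v::ab_group_add \<Rightarrow> 'v) \<Rightarrow> (nat \<Rightarrow> 'v \<Rightarrow> 'v) \<Rightarrow> nat \<Rightarrow> nat \<Rightarrow> 'v \<Rightarrow> 'v" where
  "u_odd sc Xi n k = (\<lambda>v. sc (1/2) (u_op sc Xi n k 1 v - u_op sc Xi n k (-1) v))"

definition W_gens :: "(complex \<Rightarrow> 'v::ab_group_add \<Rightarrow> 'v) \<Rightarrow> (nat \<Rightarrow> 'v \<Rightarrow> 'v) \<Rightarrow> nat \<Rightarrow> ('v \<Rightarrow> 'v) set" where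
  "W_gens sc Xi n = {u_even sc Xi n k | k. 1 \<le> k \<and> k \<le> n} \<union> {u_odd sc Xi n k | k. 1 \<le> k \<and> k \<le> n}"

definition typical :: "nat \<Rightarrow> (nat \<Rightarrow> complex) \<Rightarrow> bool" where
  "typical n s \<longleftrightarrow> (\<forall>i<n. \<forall>j<n. i \<noteq> j \<longrightarrow> s i + s j \<noteq> 0)"

end

theory Submission
  imports Defs
begin


definition hv :: "nat \<Rightarrow> nat \<Rightarrow> complex" where
  "hv m i = (if i < m then 1 else 0)"

definition Gop :: "nat \<Rightarrow> (nat \<Rightarrow> complex) \<Rightarrow> (nat \<Rightarrow> complex) \<Rightarrow> nat \<Rightarrow> complex" where
  "Gop n s c = (\<lambda>i. \<Sum>k<n. c k * s k * (hv k i + hv (Suc k) i - hv n i))"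

lemma Gop_lin: "Gop n s (\<lambda>i. a * x i + b * y i) = (\<lambda>i. a * Gop n s x i + b * Gop n s y i)"
proof
  fix i
  show "Gop n s (\<lambda>i. a * x i + b * y i) i = a * Gop n s x i + b * Gop n s y i"
    unfolding Gop_def by (simp add: sum_distrib_left sum.distrib[symmetric] algebra_simps)
qed

lemma Gop_hv: "m \<le> n \<Longrightarrow> Gop n s (hv m) = (\<lambda>i. \<Sum>k<m. s k * (hv k i + hv (Suc k) i - hv n i))"
proof -
  assume m: "m \<le> n"
  have "(\<Sum>k<n. hv m k * s k * (hv k i + hv (Suc k) i - hv n i)) =
        (\<Sum>k<m. s k * (hv k i + hv (Suc k) i - hv n i))" for i
  proof -
    have "(\<Sum>k<n. hv m k * s k * (hv k i + hv (Suc k) i - hv n i)) =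
          (\<Sum>k<n. if k < m then s k * (hv k i + hv (Suc k) i - hv n i) else 0)"
      by (rule sum.cong) (auto simp: hv_def)
    also have "\<dots> = (\<Sum>k\<in>{k\<in>{..<n}. k < m}. s k * (hv k i + hv (Suc k) i - hv n i))"
      by (rule sum.inter_filter[symmetric]) auto
    also have "{k\<in>{..<n}. k < m} = {..<m}" using m by auto
    finally show ?thesis .
  qed
  thus ?thesis unfolding Gop_def by auto
qed

lemma Gop_e: "k < n \<Longrightarrow> Gop n s (\<lambda>i. hv (Suc k) i - hv k i) = (\<lambda>i. s k * (hv k i + hv (Suc k) i - hv n i))"
proof -
  assume k: "k < n"
  have e: "(\<lambda>i. hv (Suc k) i - hv k i) = (\<lambda>i. if i = k then 1 else 0)"
    by (auto simp: hv_def)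
  show ?thesis unfolding Gop_def e using k
    by (simp add: if_distrib[of "\<lambda>x. x * _"] sum.delta cong: if_cong)
qed

fun Kj :: "(nat \<Rightarrow> complex) set \<Rightarrow> nat \<Rightarrow> (nat \<Rightarrow> complex) set" where
  "Kj K 0 = K"
| "Kj K (Suc j) = {c. \<exists>a. (\<lambda>i. c i - a * hv j i) \<in> Kj K j}"

locale krylov =
  fixes K :: "(nat \<Rightarrow> complex) set" and n :: nat and s :: "nat \<Rightarrow> complex"
  assumes Kadd: "\<And>c d. c \<in> K \<Longrightarrow> d \<in> K \<Longrightarrow> (\<lambda>i. c i + d i) \<in> K"
    and Kscl: "\<And>a c. c \<in> K \<Longrightarrow> (\<lambda>i. a * c i) \<in> K"
    and Kone: "(\<lambda>i. 1) \<in> K"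
    and KG: "\<And>c. c \<in> K \<Longrightarrow> Gop n s c \<in> K"
    and Kcong: "\<And>c d. c \<in> K \<Longrightarrow> (\<forall>i<n. c i = d i) \<Longrightarrow> d \<in> K"
    and typical_s: "\<And>i j. i < n \<Longrightarrow> j < n \<Longrightarrow> i \<noteq> j \<Longrightarrow> s i + s j \<noteq> 0"
begin

lemma Kzero: "(\<lambda>i. 0) \<in> K"
  using Kscl[OF Kone, of 0] by simp

lemma Kj_props:
  "(\<forall>c d. c \<in> Kj K j \<longrightarrow> d \<in> Kj K j \<longrightarrow> (\<lambda>i. c i + d i) \<in> Kj K j) \<and>
   (\<forall>a c. c \<in> Kj K j \<longrightarrow> (\<lambda>i. a * c i) \<in> Kj K j) \<and>
   (\<forall>c d. c \<in> Kj K j \<longrightarrow> (\<forall>i<n. c i = d i) \<longrightarrow> d \<in> Kj K j) \<and>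
   K \<subseteq> Kj K j \<and> (\<forall>m<j. hv m \<in> Kj K j)"
proof (induction j)
  case 0
  then show ?case using Kadd Kscl Kcong by auto
next
  case (Suc j)
  note IH = Suc.IH
  have add: "(\<lambda>i. c i + d i) \<in> Kj K (Suc j)" if "c \<in> Kj K (Suc j)" "d \<in> Kj K (Suc j)" for c d
  proof -
    have "\<exists>a. (\<lambda>i. c i - a * hv j i) \<in> Kj K j" using that(1) by simp
    then obtain a where a: "(\<lambda>i. c i - a * hv j i) \<in> Kj K j" by blast
    have "\<exists>b. (\<lambda>i. d i - b * hv j i) \<in> Kj K j" using that(2) by simp
    then obtain b where b: "(\<lambda>i. d i - b * hv j i) \<in> Kj K j" by blast
    have "(\<lambda>i. (c i - a * hv j i) + (d i - b * hv j i)) \<in> Kj K j" using IH a b by blast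
    moreover have "(\<lambda>i. (c i - a * hv j i) + (d i - b * hv j i)) = (\<lambda>i. (c i + d i) - (a + b) * hv j i)"
      by (auto simp: algebra_simps)
    ultimately show ?thesis by auto
  qed
  have scl: "(\<lambda>i. e * c i) \<in> Kj K (Suc j)" if "c \<in> Kj K (Suc j)" for e c
  proof -
    have "\<exists>a. (\<lambda>i. c i - a * hv j i) \<in> Kj K j" using that(1) by simp
    then obtain a where a: "(\<lambda>i. c i - a * hv j i) \<in> Kj K j" by blast
    have "(\<lambda>i. e * (c i - a * hv j i)) \<in> Kj K j" using IH a by blast
    moreover have "(\<lambda>i. e * (c i - a * hv j i)) = (\<lambda>i. e * c i - (e * a) * hv j i)"
      by (auto simp: algebra_simps)
    ultimately show ?thesis by auto
  qed
  have cong: "d \<in> Kj K (Suc j)" if "c \<in> Kj K (Suc j)" "\<forall>i<n. c i = d i" for c d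
  proof -
    have "\<exists>a. (\<lambda>i. c i - a * hv j i) \<in> Kj K j" using that(1) by simp
    then obtain a where a: "(\<lambda>i. c i - a * hv j i) \<in> Kj K j" by blast
    have "(\<lambda>i. d i - a * hv j i) \<in> Kj K j" using IH a that(2) by auto
    thus ?thesis by auto
  qed
  have sub: "K \<subseteq> Kj K (Suc j)"
  proof
    fix c assume "c \<in> K"
    hence "(\<lambda>i. c i - 0 * hv j i) \<in> Kj K j" using IH by auto
    thus "c \<in> Kj K (Suc j)" by (simp only: Kj.simps mem_Collect_eq) blast
  qed
  have hvs: "hv m \<in> Kj K (Suc j)" if "m < Suc j" for m
  proof (cases "m = j")
    case True
    have "(\<lambda>i. hv m i - 1 * hv j i) = (\<lambda>i. 0)" using True by auto
    hence "(\<lambda>i. hv m i - 1 * hv j i) \<in> Kj K j" using IH Kzero by auto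
    thus ?thesis by (simp only: Kj.simps mem_Collect_eq) blast
  next
    case False
    hence "(\<lambda>i. hv m i - 0 * hv j i) \<in> Kj K j" using IH that by auto
    thus ?thesis by (simp only: Kj.simps mem_Collect_eq) blast
  qed
  show ?case using add scl cong sub hvs by blast
qed

lemma Kj_add: "c \<in> Kj K j \<Longrightarrow> d \<in> Kj K j \<Longrightarrow> (\<lambda>i. c i + d i) \<in> Kj K j"
  and Kj_scl: "c \<in> Kj K j \<Longrightarrow> (\<lambda>i. a * c i) \<in> Kj K j"
  and Kj_cong: "c \<in> Kj K j \<Longrightarrow> (\<forall>i<n. c i = d i) \<Longrightarrow> d \<in> Kj K j"
  and Kj_sub: "c \<in> K \<Longrightarrow> c \<in> Kj K j"
  and Kj_hv: "m < j \<Longrightarrow> hv m \<in> Kj K j"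
  using Kj_props[of j] by blast+

lemma Kj_Suc: "c \<in> Kj K j \<Longrightarrow> c \<in> Kj K (Suc j)"
proof -
  assume "c \<in> Kj K j"
  moreover have "(\<lambda>i. c i - 0 * hv j i) = c" by simp
  ultimately have "(\<lambda>i. c i - 0 * hv j i) \<in> Kj K j" by simp
  thus ?thesis by (simp only: Kj.simps mem_Collect_eq) blast
qed

lemma Kj_lin: "c \<in> Kj K j \<Longrightarrow> d \<in> Kj K j \<Longrightarrow> (\<lambda>i. a * c i + b * d i) \<in> Kj K j"
  using Kj_add Kj_scl by blast

lemma hv_n: "hv n \<in> K"
  by (rule Kcong[OF Kone]) (auto simp: hv_def)

lemma Kj_sum: "finite A \<Longrightarrow> (\<And>x. x \<in> A \<Longrightarrow> f x \<in> Kj K j) \<Longrightarrow> (\<lambda>i. \<Sum>x\<in>A. f x i) \<in> Kj K j"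
proof (induction A rule: finite_induct)
  case empty
  then show ?case using Kj_sub[OF Kzero] by simp
next
  case (insert x F)
  then show ?case using Kj_add[of "f x" j "\<lambda>i. \<Sum>x\<in>F. f x i"] by simp
qed

lemma Gop_hv_in: "Suc m \<le> j \<Longrightarrow> m \<le> n \<Longrightarrow> Gop n s (hv m) \<in> Kj K j"
proof -
  assume mj: "Suc m \<le> j" and mn: "m \<le> n"
  have "(\<lambda>i. \<Sum>k<m. s k * (hv k i + hv (Suc k) i - hv n i)) \<in> Kj K j"
  proof (rule Kj_sum)
    fix k assume "k \<in> {..<m}"
    hence k: "k < m" by auto
    have "(\<lambda>i. s k * hv k i + s k * hv (Suc k) i) \<in> Kj K j"
      using Kj_hv[of k j] Kj_hv[of "Suc k" j] k mj Kj_lin by auto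
    moreover have "(\<lambda>i. (-s k) * hv n i) \<in> Kj K j" using Kj_sub[OF hv_n] Kj_scl by blast
    ultimately have "(\<lambda>i. (s k * hv k i + s k * hv (Suc k) i) + (-s k) * hv n i) \<in> Kj K j"
      using Kj_add by blast
    thus "(\<lambda>i. s k * (hv k i + hv (Suc k) i - hv n i)) \<in> Kj K j"
      by (simp add: algebra_simps)
  qed auto
  thus ?thesis using Gop_hv[OF mn] by simp
qed

lemma Kj_G: "j \<le> n \<Longrightarrow> c \<in> Kj K j \<Longrightarrow> Gop n s c \<in> Kj K j"
proof (induction j arbitrary: c)
  case 0
  then show ?case using KG by simp
next
  case (Suc j)
  obtain a where a: "(\<lambda>i. c i - a * hv j i) \<in> Kj K j" using Suc.prems by auto
  have "Gop n s (\<lambda>i. c i - a * hv j i) \<in> Kj K j" using Suc a by auto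
  hence 1: "Gop n s (\<lambda>i. c i - a * hv j i) \<in> Kj K (Suc j)"
    by (rule Kj_Suc)
  have 2: "Gop n s (hv j) \<in> Kj K (Suc j)" using Gop_hv_in[of j "Suc j"] Suc.prems by auto
  have "(\<lambda>i. 1 * Gop n s (\<lambda>i. c i - a * hv j i) i + a * Gop n s (hv j) i) \<in> Kj K (Suc j)"
    using Kj_lin[OF 1 2] .
  moreover have "Gop n s (\<lambda>i. 1 * (c i - a * hv j i) + a * hv j i) =
     (\<lambda>i. 1 * Gop n s (\<lambda>i. c i - a * hv j i) i + a * Gop n s (hv j) i)"
    by (rule Gop_lin)
  ultimately show ?case by simp
qed

lemma step:
  assumes j1: "1 \<le> j" and jn: "j < n" and S: "\<forall>k\<le>n. hv k \<in> Kj K (Suc j)"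
  shows "\<forall>k\<le>n. hv k \<in> Kj K j"
proof -
  obtain j' where j': "j = Suc j'" using j1 by (cases j) auto
  define l where "l = s j'"
  have D: "(\<lambda>i. Gop n s (hv j) i - l * hv j i) \<in> Kj K j"
  proof -
    have "Gop n s (hv j') \<in> Kj K j" using Gop_hv_in[of j' j] j' jn by auto
    moreover have "hv j' \<in> Kj K j" using Kj_hv[of j' j] j' by blast
    ultimately have "(\<lambda>i. 1 * Gop n s (hv j') i + l * hv j' i) \<in> Kj K j" using Kj_lin by blast
    moreover have "(\<lambda>i. (-l) * hv n i) \<in> Kj K j" using Kj_sub[OF hv_n] Kj_scl by blast
    ultimately have "(\<lambda>i. (1 * Gop n s (hv j') i + l * hv j' i) + (-l) * hv n i) \<in> Kj K j"
      using Kj_add by blast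
    moreover have "(\<lambda>i. (1 * Gop n s (hv j') i + l * hv j' i) + (-l) * hv n i) =
       (\<lambda>i. Gop n s (hv j) i - l * hv j i)"
      using jn j' by (simp add: Gop_hv l_def algebra_simps)
    ultimately show ?thesis by simp
  qed
  have A: "(\<lambda>i. Gop n s c i - l * c i) \<in> Kj K j" if c: "c \<in> Kj K (Suc j)" for c
  proof -
    have "\<exists>a. (\<lambda>i. c i - a * hv j i) \<in> Kj K j" using c by simp
    then obtain a where a: "(\<lambda>i. c i - a * hv j i) \<in> Kj K j" by blast
    define \<kappa> where "\<kappa> = (\<lambda>i. c i - a * hv j i)"
    have k: "\<kappa> \<in> Kj K j" using a \<kappa>_def by simp
    have Gk: "Gop n s \<kappa> \<in> Kj K j" using Kj_G[OF _ k] jn by simp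
    have cdef: "c = (\<lambda>i. 1 * \<kappa> i + a * hv j i)" unfolding \<kappa>_def by auto
    have Gc: "Gop n s c = (\<lambda>i. 1 * Gop n s \<kappa> i + a * Gop n s (hv j) i)"
      by (subst cdef, rule Gop_lin)
    have "(\<lambda>i. 1 * Gop n s \<kappa> i + (-l) * \<kappa> i) \<in> Kj K j" using Gk k Kj_lin by blast
    hence "(\<lambda>i. 1 * (1 * Gop n s \<kappa> i + (-l) * \<kappa> i) + a * (Gop n s (hv j) i - l * hv j i)) \<in> Kj K j"
      using D Kj_lin by blast
    moreover have "(\<lambda>i. 1 * (1 * Gop n s \<kappa> i + (-l) * \<kappa> i) + a * (Gop n s (hv j) i - l * hv j i)) =
      (\<lambda>i. Gop n s c i - l * c i)"
    proof (rule ext)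
      fix i
      have "Gop n s c i = Gop n s \<kappa> i + a * Gop n s (hv j) i" using Gc by simp
      moreover have "c i = \<kappa> i + a * hv j i" by (simp add: \<kappa>_def)
      ultimately show "1 * (1 * Gop n s \<kappa> i + (-l) * \<kappa> i) + a * (Gop n s (hv j) i - l * hv j i) =
        Gop n s c i - l * c i" by (simp add: algebra_simps)
    qed
    ultimately show ?thesis by simp
  qed
  have B: "(\<lambda>i. (l + s k) * hv k i - (l - s k) * hv (Suc k) i) \<in> Kj K j" if k: "k < n" for k
  proof -
    have h1: "hv (Suc k) \<in> Kj K (Suc j)" using S k by simp
    have h2: "hv k \<in> Kj K (Suc j)" using S k by simp
    have "(\<lambda>i. 1 * hv (Suc k) i + (-1) * hv k i) \<in> Kj K (Suc j)"
      by (rule Kj_lin[OF h1 h2])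
    hence e: "(\<lambda>i. hv (Suc k) i - hv k i) \<in> Kj K (Suc j)" by simp
    have "(\<lambda>i. Gop n s (\<lambda>i. hv (Suc k) i - hv k i) i - l * (hv (Suc k) i - hv k i)) \<in> Kj K j"
      using A[OF e] .
    hence g: "(\<lambda>i. s k * (hv k i + hv (Suc k) i - hv n i) - l * (hv (Suc k) i - hv k i)) \<in> Kj K j"
      using Gop_e[OF k, of s] by simp
    have "(\<lambda>i. 1 * (s k * (hv k i + hv (Suc k) i - hv n i) - l * (hv (Suc k) i - hv k i)) + s k * hv n i) \<in> Kj K j"
      by (rule Kj_lin[OF g Kj_sub[OF hv_n]])
    moreover have "(\<lambda>i. 1 * (s k * (hv k i + hv (Suc k) i - hv n i) - l * (hv (Suc k) i - hv k i)) + s k * hv n i)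
      = (\<lambda>i. (l + s k) * hv k i - (l - s k) * hv (Suc k) i)"
      by (simp add: algebra_simps)
    ultimately show ?thesis by simp
  qed
  have C: "\<forall>k. k = n - d \<longrightarrow> j \<le> k \<longrightarrow> hv k \<in> Kj K j" for d
  proof (induction d)
    case 0
    then show ?case using Kj_sub[OF hv_n] by auto
  next
    case (Suc d)
    show ?case
    proof (intro allI impI)
      fix k assume kd: "k = n - Suc d" and jk: "j \<le> k"
      have kn: "k < n" using kd jk jn by auto
      have "Suc k = n - d" using kd kn jk j1 by auto
      hence "hv (Suc k) \<in> Kj K j" using Suc.IH jk by auto
      moreover have "(\<lambda>i. (l + s k) * hv k i - (l - s k) * hv (Suc k) i) \<in> Kj K j" using B kn by auto
      ultimately have "(\<lambda>i. 1 * ((l + s k) * hv k i - (l - s k) * hv (Suc k) i) + (l - s k) * hv (Suc k) i) \<in> Kj K j"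
        using Kj_lin by blast
      hence "(\<lambda>i. (l + s k) * hv k i) \<in> Kj K j" by (simp add: algebra_simps)
      hence "(\<lambda>i. inverse (l + s k) * ((l + s k) * hv k i)) \<in> Kj K j" using Kj_scl by blast
      moreover have "l + s k \<noteq> 0" unfolding l_def using typical_s[of j' k] j' jk kn by auto
      moreover have "(\<lambda>i. inverse (l + s k) * ((l + s k) * hv k i)) = hv k"
        using calculation(2) by (intro ext) (simp add: mult.assoc[symmetric])
      ultimately show "hv k \<in> Kj K j" by simp
    qed
  qed
  show ?thesis
  proof (intro allI impI)
    fix k assume "k \<le> n"
    then show "hv k \<in> Kj K j"
      using C[of "n - k"] Kj_hv[of k j] by (cases "k < j") auto
  qed
qed

lemma all_S: "d < n \<Longrightarrow> \<forall>k\<le>n. hv k \<in> Kj K (n - d)"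
proof (induction d)
  case 0
  show ?case
  proof (intro allI impI)
    fix k assume "k \<le> n"
    then show "hv k \<in> Kj K (n - 0)"
      using Kj_hv[of k n] Kj_sub[OF hv_n] by (cases "k < n") auto
  qed
next
  case (Suc d)
  have "Suc (n - Suc d) = n - d" using Suc.prems by auto
  then show ?case using step[of "n - Suc d"] Suc by auto
qed

theorem unit_in_K: "k < n \<Longrightarrow> (\<lambda>i. if i = k then 1 else 0) \<in> K"
proof -
  assume k: "k < n"
  have hK: "hv m \<in> K" if "m \<le> n" for m
  proof -
    have "hv m \<in> Kj K 1" using all_S[of "n - 1"] k that by auto
    then obtain a where "(\<lambda>i. hv m i - a * hv 0 i) \<in> K" by auto
    moreover have "(\<lambda>i. hv m i - a * hv 0 i) = hv m" by (auto simp: hv_def)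
    ultimately show ?thesis by simp
  qed
  have "(\<lambda>i. (-1) * hv k i) \<in> K" using Kscl[OF hK[of k], of "-1"] k by simp
  hence "(\<lambda>i. 1 * hv (Suc k) i + (-1) * hv k i) \<in> K"
    using hK[of "Suc k"] k Kadd[of "hv (Suc k)" "\<lambda>i. (-1) * hv k i"] by auto
  moreover have "(\<lambda>i. 1 * hv (Suc k) i + (-1) * hv k i) = (\<lambda>i. if i = k then 1 else 0)"
    by (auto simp: hv_def)
  ultimately show ?thesis by simp
qed

end



locale qsetup = vector_space sc for sc :: "complex \<Rightarrow> 'v::ab_group_add \<Rightarrow> 'v" +
  fixes n :: nat and Xi :: "nat \<Rightarrow> 'v \<Rightarrow> 'v" and s :: "nat \<Rightarrow> complex"
  assumes Xlin: "i < n \<Longrightarrow> Vector_Spaces.linear sc sc (Xi i)"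
    and Xanti0: "i < n \<Longrightarrow> j < n \<Longrightarrow> i \<noteq> j \<Longrightarrow> Xi i (Xi j v) + Xi j (Xi i v) = 0"
    and Xsq: "i < n \<Longrightarrow> Xi i (Xi i v) = sc (s i) v"
begin

lemma Xhom: "i < n \<Longrightarrow> module_hom sc sc (Xi i)"
  using Xlin by (simp add: linear_iff_module_hom)

lemma Xadd: "i < n \<Longrightarrow> Xi i (x + y) = Xi i x + Xi i y"
  and Xsc: "i < n \<Longrightarrow> Xi i (sc a x) = sc a (Xi i x)"
  and Xneg: "i < n \<Longrightarrow> Xi i (- x) = - Xi i x"
  and Xdiff: "i < n \<Longrightarrow> Xi i (x - y) = Xi i x - Xi i y"
  and Xzero: "i < n \<Longrightarrow> Xi i 0 = 0"
  and Xsum: "i < n \<Longrightarrow> Xi i (sum g A) = (\<Sum>a\<in>A. Xi i (g a))"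
  using module_hom.add[OF Xhom] module_hom.scale[OF Xhom] module_hom.neg[OF Xhom]
    module_hom.diff[OF Xhom] module_hom.zero[OF Xhom] module_hom.sum[OF Xhom] by auto

lemma Xanti: "i < n \<Longrightarrow> j < n \<Longrightarrow> i \<noteq> j \<Longrightarrow> Xi i (Xi j v) = - Xi j (Xi i v)"
  using Xanti0 by (simp add: eq_neg_iff_add_eq_0)

lemma half_double: "sc (1/2) (x + x) = x"
proof -
  have "sc (1/2) (x + x) = sc (1/2) x + sc (1/2) x" by (rule scale_right_distrib)
  also have "\<dots> = sc (1/2 + 1/2) x" by (rule scale_left_distrib[symmetric])
  finally show ?thesis by simp
qed

lemma set1: "{S. S \<subseteq> {..<n} \<and> card S = 1} = (\<lambda>i. {i}) ` {..<n}"
  by (auto simp: card_1_singleton_iff)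

lemma u_op1: "u_op sc Xi n 1 t = (\<lambda>v. \<Sum>i<n. Xi i (Xi i v) + sc t (Xi i v))"
  unfolding u_op_def set1 by (subst sum.reindex) (auto intro: inj_onI)

lemma u_odd1: "u_odd sc Xi n 1 = (\<lambda>v. \<Sum>i<n. Xi i v)"
proof
  fix v
  have "u_op sc Xi n 1 1 v - u_op sc Xi n 1 (-1) v = (\<Sum>i<n. Xi i v + Xi i v)"
    unfolding u_op1 sum_subtractf[symmetric] by (rule sum.cong) auto
  also have "\<dots> = (\<Sum>i<n. Xi i v) + (\<Sum>i<n. Xi i v)" by (simp add: sum.distrib)
  finally show "u_odd sc Xi n 1 v = (\<Sum>i<n. Xi i v)"
    unfolding u_odd_def by (simp add: half_double)
qed

lemma sorted2: "i < j \<Longrightarrow> sorted_list_of_set {i, j} = [i, j]"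
  by auto

lemma set2: "{S. S \<subseteq> {..<n} \<and> card S = 2} = (\<lambda>(j, i). {i, j}) ` (SIGMA j:{..<n}. {..<j})"
proof
  show "{S. S \<subseteq> {..<n} \<and> card S = 2} \<subseteq> (\<lambda>(j, i). {i, j}) ` (SIGMA j:{..<n}. {..<j})"
  proof
    fix S assume "S \<in> {S. S \<subseteq> {..<n} \<and> card S = 2}"
    then obtain x y where S: "S = {x, y}" "x \<noteq> y" "x < n" "y < n"
      by (auto simp: card_2_iff)
    show "S \<in> (\<lambda>(j, i). {i, j}) ` (SIGMA j:{..<n}. {..<j})"
    proof (cases "x < y")
      case True
      then show ?thesis using S by (intro image_eqI[of _ _ "(y, x)"]) auto
    next
      case False
      then show ?thesis using S by (intro image_eqI[of _ _ "(x, y)"]) auto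
    qed
  qed
  show "(\<lambda>(j, i). {i, j}) ` (SIGMA j:{..<n}. {..<j}) \<subseteq> {S. S \<subseteq> {..<n} \<and> card S = 2}"
    by auto
qed

lemma inj2: "inj_on (\<lambda>(j, i). {i, j}) (SIGMA j:{..<n}. {..<j})"
  by (auto simp: inj_on_def doubleton_eq_iff)

lemma ord2: "i < j \<Longrightarrow> j < n \<Longrightarrow> ord_prod sc Xi t [i, j] v =
  sc (s i * s j) v + sc t (sc (s i) (Xi j v) - sc (s j) (Xi i v)) - sc (t * t) (Xi i (Xi j v))"
  by (simp add: Xsq Xadd Xsc algebra_simps)

definition Qop :: "'v \<Rightarrow> 'v" where
  "Qop = (\<lambda>v. \<Sum>j<n. \<Sum>i<j. Xi i (Xi j v))"

definition e2 :: complex where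
  "e2 = (\<Sum>j<n. \<Sum>i<j. s i * s j)"

lemma u_op2: "u_op sc Xi n 2 t v = (\<Sum>j<n. \<Sum>i<j. ord_prod sc Xi t [i, j] v)"
proof -
  have "u_op sc Xi n 2 t v = (\<Sum>S\<in>(\<lambda>(j, i). {i, j}) ` (SIGMA j:{..<n}. {..<j}). ord_prod sc Xi t (sorted_list_of_set S) v)"
    unfolding u_op_def set2 ..
  also have "\<dots> = (\<Sum>p\<in>(SIGMA j:{..<n}. {..<j}). ord_prod sc Xi t (sorted_list_of_set ((\<lambda>(j, i). {i, j}) p)) v)"
    by (rule sum.reindex[OF inj2, unfolded comp_def])
  also have "\<dots> = (\<Sum>p\<in>(SIGMA j:{..<n}. {..<j}). (\<lambda>j i. ord_prod sc Xi t [i, j] v) (fst p) (snd p))"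
    by (rule sum.cong) (auto simp: sorted2)
  also have "\<dots> = (\<Sum>j<n. \<Sum>i<j. ord_prod sc Xi t [i, j] v)"
    by (subst sum.Sigma) (auto simp: case_prod_beta)
  finally show ?thesis .
qed

lemma u_even2: "u_even sc Xi n 2 = (\<lambda>v. sc e2 v - Qop v)"
proof
  fix v
  have "u_even sc Xi n 2 v = sc (1/2) (\<Sum>j<n. \<Sum>i<j. ord_prod sc Xi 1 [i, j] v + ord_prod sc Xi (-1) [i, j] v)"
    unfolding u_even_def u_op2 by (simp only: sum.distrib)
  also have "\<dots> = (\<Sum>j<n. \<Sum>i<j. sc (1/2) (ord_prod sc Xi 1 [i, j] v + ord_prod sc Xi (-1) [i, j] v))"
    by (simp add: scale_sum_right)
  also have "\<dots> = (\<Sum>j<n. \<Sum>i<j. sc (s i * s j) v - Xi i (Xi j v))"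
  proof (intro sum.cong refl)
    fix j i assume "j \<in> {..<n}" "i \<in> {..<j}"
    hence ij: "i < j" "j < n" by auto
    have "ord_prod sc Xi 1 [i, j] v + ord_prod sc Xi (-1) [i, j] v =
      (sc (s i * s j) v - Xi i (Xi j v)) + (sc (s i * s j) v - Xi i (Xi j v))"
      unfolding ord2[OF ij] by (simp add: algebra_simps)
    thus "sc (1/2) (ord_prod sc Xi 1 [i, j] v + ord_prod sc Xi (-1) [i, j] v) = sc (s i * s j) v - Xi i (Xi j v)"
      by (simp add: half_double)
  qed
  also have "\<dots> = sc e2 v - Qop v"
    unfolding e2_def Qop_def by (simp add: sum_subtractf scale_sum_left)
  finally show "u_even sc Xi n 2 v = sc e2 v - Qop v" by simp
qed


lemma two_sc: "sc (2 * a) x = sc a x + sc a x"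
proof -
  have "(2::complex) * a = a + a" by simp
  hence "sc (2 * a) x = sc (a + a) x" by simp
  also have "\<dots> = sc a x + sc a x" by (rule scale_left_distrib)
  finally show ?thesis .
qed


lemma term_comm:
  assumes ij: "i < j" "j < n" and k: "k < n"
  shows "Xi i (Xi j (Xi k v)) - Xi k (Xi i (Xi j v)) =
    (if j = k then sc (2 * s k) (Xi i v) else if i = k then - sc (2 * s k) (Xi j v) else 0)"
proof -
  have i: "i < n" using ij by auto
  consider "j = k" | "i = k" | "j \<noteq> k" "i \<noteq> k" by auto
  then show ?thesis
  proof cases
    case 1
    hence ik: "i \<noteq> k" using ij by auto
    have a: "Xi k (Xi i (Xi k v)) = - Xi i (Xi k (Xi k v))" using Xanti[OF k i] ik by auto
    have b: "Xi k (Xi k v) = sc (s k) v" using Xsq[OF k] .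
    have "Xi i (Xi k (Xi k v)) - Xi k (Xi i (Xi k v)) = Xi i (sc (s k) v) + Xi i (sc (s k) v)"
      unfolding a b by simp
    also have "\<dots> = sc (2 * s k) (Xi i v)" unfolding two_sc Xsc[OF i] ..
    finally show ?thesis using 1 ik by simp
  next
    case 2
    hence jk: "j \<noteq> k" using ij by auto
    have a: "Xi j (Xi k v) = - Xi k (Xi j v)" using Xanti[OF ij(2) k] jk by auto
    have b: "Xi k (Xi k w) = sc (s k) w" for w using Xsq[OF k] .
    have "Xi k (Xi j (Xi k v)) - Xi k (Xi k (Xi j v)) = - sc (s k) (Xi j v) - sc (s k) (Xi j v)"
      unfolding a Xneg[OF k] b ..
    also have "\<dots> = - sc (2 * s k) (Xi j v)" unfolding two_sc by simp
    finally show ?thesis using 2 jk by simp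
  next
    case 3
    have a: "Xi j (Xi k v) = - Xi k (Xi j v)" using Xanti[OF ij(2) k] 3 by auto
    have b: "Xi i (Xi k w) = - Xi k (Xi i w)" for w using Xanti[OF i k] 3 by auto
    have "Xi i (Xi j (Xi k v)) - Xi k (Xi i (Xi j v)) = 0"
      unfolding a Xneg[OF i] b by simp
    then show ?thesis using 3 by simp
  qed
qed

lemma Qop_comm:
  assumes k: "k < n"
  shows "Qop (Xi k v) - Xi k (Qop v) = (\<Sum>i<n. sc (2 * s k * (hv k i + hv (Suc k) i - hv n i)) (Xi i v))"
proof -
  define A where "A = (\<lambda>i. sc (2 * s k) (Xi i v))"
  define B where "B = (\<lambda>j. - sc (2 * s k) (Xi j v))"
  have "Qop (Xi k v) - Xi k (Qop v) = (\<Sum>j<n. \<Sum>i<j. Xi i (Xi j (Xi k v)) - Xi k (Xi i (Xi j v)))"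
    unfolding Qop_def using k by (simp add: Xsum sum_subtractf)
  also have "\<dots> = (\<Sum>j<n. \<Sum>i<j. (if j = k then A i else if i = k then B j else 0))"
    unfolding A_def B_def by (intro sum.cong refl) (auto simp: term_comm k)
  also have "\<dots> = (\<Sum>j<n. (if j = k then (\<Sum>i<k. A i) else 0) + (if k < j then B j else 0))"
  proof (intro sum.cong refl)
    fix j assume "j \<in> {..<n}"
    show "(\<Sum>i<j. (if j = k then A i else if i = k then B j else 0)) =
      (if j = k then (\<Sum>i<k. A i) else 0) + (if k < j then B j else 0)"
    proof (cases "j = k")
      case True then show ?thesis by simp
    next
      case False
      then have "(\<Sum>i<j. (if j = k then A i else if i = k then B j else 0)) = (\<Sum>i<j. if i = k then B j else 0)"
        by simp
      also have "\<dots> = (if k < j then B j else 0)" by (simp add: sum.delta)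
      finally show ?thesis using False by simp
    qed
  qed
  also have "\<dots> = (\<Sum>i<k. A i) + (\<Sum>j<n. if k < j then B j else 0)"
    using k by (simp add: sum.distrib sum.delta)
  also have "\<dots> = (\<Sum>i<n. sc (2 * s k * (hv k i + hv (Suc k) i - hv n i)) (Xi i v))"
  proof -
    have "(\<Sum>i<n. sc (2 * s k * (hv k i + hv (Suc k) i - hv n i)) (Xi i v)) =
      (\<Sum>i<n. (if i < k then A i else 0) + (if k < i then B i else 0))"
      unfolding A_def B_def by (intro sum.cong refl) (auto simp: hv_def)
    also have "\<dots> = (\<Sum>i<n. if i < k then A i else 0) + (\<Sum>i<n. if k < i then B i else 0)"
      by (simp add: sum.distrib)
    also have "(\<Sum>i<n. if i < k then A i else 0) = (\<Sum>i\<in>{i\<in>{..<n}. i < k}. A i)"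
      by (rule sum.inter_filter[symmetric]) auto
    also have "{i\<in>{..<n}. i < k} = {..<k}" using k by auto
    finally show ?thesis by simp
  qed
  finally show ?thesis .
qed

definition Lop :: "(nat \<Rightarrow> complex) \<Rightarrow> 'v \<Rightarrow> 'v" where
  "Lop c = (\<lambda>v. \<Sum>i<n. sc (c i) (Xi i v))"

lemma Lop_add: "Lop (\<lambda>i. c i + d i) = (\<lambda>v. Lop c v + Lop d v)"
  unfolding Lop_def by (simp add: scale_left_distrib sum.distrib)

lemma Lop_scl: "Lop (\<lambda>i. a * c i) = (\<lambda>v. sc a (Lop c v))"
  unfolding Lop_def by (simp add: scale_sum_right)

lemma Lop_cong: "\<forall>i<n. c i = d i \<Longrightarrow> Lop c = Lop d"
  unfolding Lop_def by (intro ext sum.cong) auto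

lemma Lop_one: "Lop (\<lambda>i. 1) = u_odd sc Xi n 1"
  unfolding Lop_def u_odd1 by simp

lemma Lop_unit: "k < n \<Longrightarrow> Lop (\<lambda>i. if i = k then 1 else 0) = Xi k"
  unfolding Lop_def by (intro ext) (simp add: if_distrib[of "\<lambda>a. sc a _"] sum.delta cong: if_cong)

lemma Qop_lin: "Qop (Lop c v) = (\<Sum>k<n. sc (c k) (Qop (Xi k v)))"
proof -
  have "Qop (Lop c v) = (\<Sum>j<n. \<Sum>i<j. \<Sum>k<n. sc (c k) (Xi i (Xi j (Xi k v))))"
    unfolding Qop_def Lop_def
    by (intro sum.cong refl) (simp add: Xsum Xsc)
  also have "\<dots> = (\<Sum>j<n. \<Sum>k<n. \<Sum>i<j. sc (c k) (Xi i (Xi j (Xi k v))))"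
    by (rule sum.cong[OF refl], rule sum.swap)
  also have "\<dots> = (\<Sum>k<n. \<Sum>j<n. \<Sum>i<j. sc (c k) (Xi i (Xi j (Xi k v))))"
    by (rule sum.swap)
  also have "\<dots> = (\<Sum>k<n. sc (c k) (Qop (Xi k v)))"
    unfolding Qop_def by (simp add: scale_sum_right)
  finally show ?thesis .
qed

lemma LG: "Lop (Gop n s c) v = sc (1/2) (Qop (Lop c v) - Lop c (Qop v))"
proof -
  define g where "g = (\<lambda>k i. hv k i + hv (Suc k) i - hv n i)"
  have "Qop (Lop c v) - Lop c (Qop v) = (\<Sum>k<n. sc (c k) (Qop (Xi k v) - Xi k (Qop v)))"
    unfolding Qop_lin by (simp add: Lop_def scale_right_diff_distrib sum_subtractf)
  also have "\<dots> = (\<Sum>k<n. sc (c k) (\<Sum>i<n. sc (2 * s k * g k i) (Xi i v)))"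
    unfolding g_def by (intro sum.cong refl) (simp add: Qop_comm)
  also have "\<dots> = (\<Sum>k<n. \<Sum>i<n. sc (c k * (2 * s k * g k i)) (Xi i v))"
    by (simp add: scale_sum_right)
  also have "\<dots> = (\<Sum>i<n. \<Sum>k<n. sc (c k * (2 * s k * g k i)) (Xi i v))"
    by (rule sum.swap)
  also have "\<dots> = (\<Sum>i<n. sc (2 * Gop n s c i) (Xi i v))"
  proof (intro sum.cong refl)
    fix i
    have "(\<Sum>k<n. c k * (2 * s k * g k i)) = 2 * Gop n s c i"
      unfolding Gop_def g_def by (simp add: sum_distrib_left algebra_simps)
    thus "(\<Sum>k<n. sc (c k * (2 * s k * g k i)) (Xi i v)) = sc (2 * Gop n s c i) (Xi i v)"
      by (simp add: scale_sum_left[symmetric])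
  qed
  finally have "sc (1/2) (Qop (Lop c v) - Lop c (Qop v)) = (\<Sum>i<n. sc (1/2) (sc (2 * Gop n s c i) (Xi i v)))"
    by (simp add: scale_sum_right)
  also have "\<dots> = Lop (Gop n s c) v" unfolding Lop_def by simp
  finally show ?thesis by simp
qed

abbreviation OA where "OA \<equiv> op_alg sc (W_gens sc Xi n)"

lemma OA_comm: "S \<in> OA \<Longrightarrow> T \<in> OA \<Longrightarrow> (\<lambda>v. S (T v) - T (S v)) \<in> OA"
proof -
  assume S: "S \<in> OA" and T: "T \<in> OA"
  have "(\<lambda>v. (S \<circ> T) v + sc (-1) ((T \<circ> S) v)) \<in> OA"
    by (intro op_alg_add op_alg_scale op_alg_comp S T)
  moreover have "(\<lambda>v. (S \<circ> T) v + sc (-1) ((T \<circ> S) v)) = (\<lambda>v. S (T v) - T (S v))"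
    by auto
  ultimately show ?thesis by simp
qed

lemma Qop_OA: "Qop \<in> OA"
proof (cases "2 \<le> n")
  case True
  have "u_even sc Xi n 2 \<in> W_gens sc Xi n" unfolding W_gens_def using True by auto
  hence "(\<lambda>v. sc e2 (id v) + sc (-1) (u_even sc Xi n 2 v)) \<in> OA"
    by (intro op_alg_add op_alg_scale op_alg_id op_alg_gen)
  moreover have "(\<lambda>v. sc e2 (id v) + sc (-1) (u_even sc Xi n 2 v)) = Qop"
    unfolding u_even2 by auto
  ultimately show ?thesis by simp
next
  case False
  hence "n = 0 \<or> n = 1" by auto
  hence "Qop = (\<lambda>v. sc 0 (id v))" unfolding Qop_def by auto
  moreover have "(\<lambda>v. sc 0 (id v)) \<in> OA" by (intro op_alg_scale op_alg_id)
  ultimately show ?thesis by simp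
qed

lemma Xi_OA:
  assumes n1: "1 \<le> n" and typs: "\<And>i j. i < n \<Longrightarrow> j < n \<Longrightarrow> i \<noteq> j \<Longrightarrow> s i + s j \<noteq> 0"
  shows "k < n \<Longrightarrow> Xi k \<in> OA"
proof -
  assume k: "k < n"
  interpret kr: krylov "{c. Lop c \<in> OA}" n s
  proof
    fix c d assume "c \<in> {c. Lop c \<in> OA}" "d \<in> {c. Lop c \<in> OA}"
    thus "(\<lambda>i. c i + d i) \<in> {c. Lop c \<in> OA}" by (simp add: Lop_add op_alg_add)
  next
    fix a c assume "c \<in> {c. Lop c \<in> OA}"
    thus "(\<lambda>i. a * c i) \<in> {c. Lop c \<in> OA}" by (simp add: Lop_scl op_alg_scale)
  next
    have "u_odd sc Xi n 1 \<in> W_gens sc Xi n" unfolding W_gens_def using n1 by auto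
    thus "(\<lambda>i. 1) \<in> {c. Lop c \<in> OA}" by (simp add: Lop_one op_alg_gen)
  next
    fix c assume "c \<in> {c. Lop c \<in> OA}"
    hence "(\<lambda>v. Qop (Lop c v) - Lop c (Qop v)) \<in> OA" using OA_comm Qop_OA by auto
    hence "(\<lambda>v. sc (1/2) (Qop (Lop c v) - Lop c (Qop v))) \<in> OA" by (rule op_alg_scale)
    moreover have "Lop (Gop n s c) = (\<lambda>v. sc (1/2) (Qop (Lop c v) - Lop c (Qop v)))"
      using LG by auto
    ultimately show "Gop n s c \<in> {c. Lop c \<in> OA}" by simp
  next
    fix c d assume "c \<in> {c. Lop c \<in> OA}" "\<forall>i<n. c i = d i"
    thus "d \<in> {c. Lop c \<in> OA}" using Lop_cong[of c d] by simp
  next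
    fix i j assume "i < n" "j < n" "i \<noteq> j"
    thus "s i + s j \<noteq> 0" using typs by auto
  qed
  have "(\<lambda>i. if i = k then 1 else 0) \<in> {c. Lop c \<in> OA}" using kr.unit_in_K k by auto
  thus ?thesis using Lop_unit k by auto
qed

end

theorem theorem4p2:
  fixes sc :: "complex \<Rightarrow> 'v::ab_group_add \<Rightarrow> 'v"
    and V0 V1 :: "'v set" and n :: nat and Xi :: "nat \<Rightarrow> 'v \<Rightarrow> 'v" and s :: "nat \<Rightarrow> complex"
  assumes "n \<ge> 1"
    and "typical n s"
    and "Uh_module sc V0 V1 n Xi"
    and "\<forall>i<n. \<forall>v. Xi i (Xi i v) = sc (s i) v"
    and "simple_graded sc V0 V1 (Xi ` {..<n})"
  shows "simple_graded sc V0 V1 (W_gens sc Xi n)"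
proof -
  have vs: "vector_space sc" and lin: "\<And>i. i < n \<Longrightarrow> Vector_Spaces.linear sc sc (Xi i)"
    and anti: "\<And>i j v. i < n \<Longrightarrow> j < n \<Longrightarrow> i \<noteq> j \<Longrightarrow> Xi i (Xi j v) + Xi j (Xi i v) = 0"
    using assms(3) unfolding Uh_module_def by auto
  interpret q: qsetup sc n Xi s
    unfolding qsetup_def qsetup_axioms_def using vs lin anti assms(4) by auto
  have XiOA: "Xi k \<in> op_alg sc (W_gens sc Xi n)" if "k < n" for k
    using q.Xi_OA[OF assms(1) _ that] assms(2) unfolding typical_def by auto
  have sub: "T \<in> op_alg sc (W_gens sc Xi n)" if "T \<in> op_alg sc (Xi ` {..<n})" for T
    using that
  proof (induction rule: op_alg.induct)
    case op_alg_id
    then show ?case by (rule op_alg.op_alg_id)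
  next
    case (op_alg_gen g)
    then show ?case using XiOA by auto
  next
    case (op_alg_add S T)
    then show ?case by (simp add: op_alg.op_alg_add)
  next
    case (op_alg_scale T c)
    then show ?case by (simp add: op_alg.op_alg_scale)
  next
    case (op_alg_comp S T)
    then show ?case by (blast intro: op_alg.op_alg_comp)
  qed
  show ?thesis
    using assms(5) sub unfolding simple_graded_def by blast
qed

end
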